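(* Let $\overline{\mathbb P}$ be a probability measure on $\Omega_+^2$ such that $\overline{\mathbb P}[\{(\omega_1,\omega_2): \omega_1\le\omega_2\}]=1$ and such that, for $i=1,2$, $(\omega_i(x))_{x\ge0}$ is stationary and ergodic under $\overline{\mathbb P}$. For $i=1,2$ let $v_i$ denote the $\overline{\mathbb P}\times P_{0,\omega_i}$-a.s. constant limit of $X_n/n$ as $n\to\infty$. Then $v_1\le v_2$.
   Context: Cookie environments: $\Omega_+=([1/2,1]^{\mathbb N})^{\mathbb Z}$, $\omega(x)=(\omega(x,i))_{i\ge1}$; $\omega_1\le\omega_2$ means $\omega_1(x,i)\le\omega_2(x,i)$ for all $x\in\mathbb Z,i\ge1$. $P_{x,\omega}$ is the law of the nearest-neighbor process $(X_n)_{n\ge0}$ with $X_0=x$ which, on its $i$-th visit to site $z$, jumps to $z+1$ with probability $\omega(z,i)$ and to $z-1$ otherwise. $\overline{\mathbb P}\times P_{0,\omega_i}$ denotes the measure $\overline{\mathbb E}[P_{0,\omega_i}[\cdot]]$. (Under stationarity and ergodicity of the environment, $X_n/n$ converges almost surely to a deterministic constant.) *)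

theory Defs
  imports "HOL-Probability.Probability"
begin

text \<open>An environment is encoded as a function
  \<open>\<omega> :: int \<Rightarrow> nat \<Rightarrow> real\<close> where \<open>\<omega> x k\<close> is the paper's \<open>\<omega>(x, k+1)\<close>,
  i.e. the right-jump probability on the \<open>(k+1)\<close>-th visit to \<open>x\<close>
  (equivalently: after \<open>k\<close> previous visits).\<close>

type_synonym env = "int \<Rightarrow> nat \<Rightarrow> real"

definition Omega_plus :: "env set" where
  "Omega_plus = {\<omega>. \<forall>x k. 1/2 \<le> \<omega> x k \<and> \<omega> x k \<le> 1}"

definition env_le :: "env \<Rightarrow> env \<Rightarrow> bool" where
  "env_le \<omega>1 \<omega>2 \<longleftrightarrow> (\<forall>x k. \<omega>1 x k \<le> \<omega>2 x k)"

definition env_M :: "env measure" where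
  "env_M = PiM UNIV (\<lambda>_::int. PiM UNIV (\<lambda>_::nat. borel :: real measure))"

definition path_M :: "(nat \<Rightarrow> int) measure" where
  "path_M = PiM UNIV (\<lambda>_::nat. count_space UNIV)"

definition step_prob :: "env \<Rightarrow> (nat \<Rightarrow> int) \<Rightarrow> nat \<Rightarrow> real" where
  "step_prob \<omega> p k =
     (let i = card {j. j < k \<and> p j = p k} in
      if p (Suc k) = p k + 1 then \<omega> (p k) i
      else if p (Suc k) = p k - 1 then 1 - \<omega> (p k) i
      else 0)"

definition path_prob :: "env \<Rightarrow> int \<Rightarrow> (nat \<Rightarrow> int) \<Rightarrow> nat \<Rightarrow> real" where
  "path_prob \<omega> x p n = (if p 0 = x then (\<Prod>k<n. step_prob \<omega> p k) else 0)"

definition walk_law :: "env \<Rightarrow> int \<Rightarrow> (nat \<Rightarrow> int) measure \<Rightarrow> bool" where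
  "walk_law \<omega> x M \<longleftrightarrow>
     prob_space M \<and> sets M = sets path_M \<and>
     (\<forall>n p. measure M {X \<in> space M. \<forall>k\<le>n. X k = p k} = path_prob \<omega> x p n)"

definition seq_M :: "(nat \<Rightarrow> nat \<Rightarrow> real) measure" where
  "seq_M = PiM UNIV (\<lambda>_::nat. PiM UNIV (\<lambda>_::nat. borel :: real measure))"

definition seq_shift :: "(nat \<Rightarrow> nat \<Rightarrow> real) \<Rightarrow> (nat \<Rightarrow> nat \<Rightarrow> real)" where
  "seq_shift s = (\<lambda>x. s (Suc x))"

definition stationary_ergodic :: "'a measure \<Rightarrow> ('a \<Rightarrow> nat \<Rightarrow> nat \<Rightarrow> real) \<Rightarrow> bool" where
  "stationary_ergodic M Y \<longleftrightarrow>
     Y \<in> M \<rightarrow>\<^sub>M seq_M \<and>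
     distr M seq_M (seq_shift \<circ> Y) = distr M seq_M Y \<and>
     (\<forall>A \<in> sets seq_M. seq_shift -` A \<inter> space seq_M = A \<longrightarrow>
        measure M (Y -` A \<inter> space M) = 0 \<or> measure M (Y -` A \<inter> space M) = 1)"

definition nonneg_part :: "env \<Rightarrow> nat \<Rightarrow> nat \<Rightarrow> real" where
  "nonneg_part \<omega> = (\<lambda>x. \<omega> (int x))"

end

theory Submission
  imports Defs
begin

fun Eexp :: "(int \<Rightarrow> nat \<Rightarrow> real) \<Rightarrow> (int \<times> nat) list \<Rightarrow> ((int \<times> nat \<Rightarrow> bool) \<Rightarrow> real) \<Rightarrow> real" where
  "Eexp \<omega> [] f = f (\<lambda>_. False)"
| "Eexp \<omega> (c # cs) f = \<omega> (fst c) (snd c) * Eexp \<omega> cs (\<lambda>\<alpha>. f (\<alpha>(c := True)))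
      + (1 - \<omega> (fst c) (snd c)) * Eexp \<omega> cs (\<lambda>\<alpha>. f (\<alpha>(c := False)))"

lemma Eexp_const: "Eexp \<omega> cs (\<lambda>_. k) = k"
  by (induction cs) (auto simp: algebra_simps)

lemma Eexp_add: "Eexp \<omega> cs (\<lambda>\<alpha>. f \<alpha> + g \<alpha>) = Eexp \<omega> cs f + Eexp \<omega> cs g"
  by (induction cs arbitrary: f g) (auto simp: algebra_simps)

lemma Eexp_cmult: "Eexp \<omega> cs (\<lambda>\<alpha>. k * f \<alpha>) = k * Eexp \<omega> cs f"
  by (induction cs arbitrary: f) (auto simp: algebra_simps)

lemma Eexp_sum: "Eexp \<omega> cs (\<lambda>\<alpha>. \<Sum>p\<in>P. f p \<alpha>) = (\<Sum>p\<in>P. Eexp \<omega> cs (f p))"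
  by (induction cs arbitrary: f) (simp_all add: sum.distrib sum_distrib_left)

lemma Eexp_diff: "Eexp \<omega> cs (\<lambda>\<alpha>. f \<alpha> - g \<alpha>) = Eexp \<omega> cs f - Eexp \<omega> cs g"
proof -
  have "Eexp \<omega> cs (\<lambda>\<alpha>. f \<alpha> - g \<alpha>) = Eexp \<omega> cs (\<lambda>\<alpha>. f \<alpha> + (-1) * g \<alpha>)" by simp
  also have "\<dots> = Eexp \<omega> cs f + Eexp \<omega> cs (\<lambda>\<alpha>. (-1) * g \<alpha>)" by (rule Eexp_add)
  also have "\<dots> = Eexp \<omega> cs f - Eexp \<omega> cs g" by (simp only: Eexp_cmult)
  finally show ?thesis .
qed

definition unit_env :: "(int \<Rightarrow> nat \<Rightarrow> real) \<Rightarrow> bool" where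
  "unit_env \<omega> \<longleftrightarrow> (\<forall>x i. 0 \<le> \<omega> x i \<and> \<omega> x i \<le> 1)"

lemma Eexp_mono:
  assumes "unit_env \<omega>" "\<And>\<alpha>. f \<alpha> \<le> g \<alpha>"
  shows "Eexp \<omega> cs f \<le> Eexp \<omega> cs g"
  using assms(2)
proof (induction cs arbitrary: f g)
  case Nil then show ?case by simp
next
  case (Cons c cs)
  have a: "0 \<le> \<omega> (fst c) (snd c)" "0 \<le> 1 - \<omega> (fst c) (snd c)" "\<omega> (fst c) (snd c) \<le> 1"
    using assms(1) unfolding unit_env_def by auto
  have 1: "Eexp \<omega> cs (\<lambda>\<alpha>. f (\<alpha>(c := b))) \<le> Eexp \<omega> cs (\<lambda>\<alpha>. g (\<alpha>(c := b)))" for b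
    by (rule Cons.IH) (rule Cons.prems)
  show ?case
    using 1[of True] 1[of False] by (simp del: fun_upd_apply) (intro add_mono mult_left_mono, auto simp: a)
qed

lemma Eexp_cong_supp:
  assumes "\<And>\<alpha>. (\<forall>c. c \<notin> set cs \<longrightarrow> \<not> \<alpha> c) \<Longrightarrow> f \<alpha> = g \<alpha>"
  shows "Eexp \<omega> cs f = Eexp \<omega> cs g"
  using assms
proof (induction cs arbitrary: f g)
  case Nil then show ?case by simp
next
  case (Cons c cs)
  have 1: "Eexp \<omega> cs (\<lambda>\<alpha>. f (\<alpha>(c := b))) = Eexp \<omega> cs (\<lambda>\<alpha>. g (\<alpha>(c := b)))" for b
    by (rule Cons.IH) (rule Cons.prems, auto)
  show ?case using 1[of True] 1[of False] by simp
qed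

lemma Eexp_ignore:
  assumes "\<And>\<alpha> b. f (\<alpha>(c := b)) = f \<alpha>"
  shows "Eexp \<omega> (c # cs) f = Eexp \<omega> cs f"
proof -
  have "(\<lambda>\<alpha>. f (\<alpha>(c := b))) = f" for b using assms by auto
  then show ?thesis by (simp add: algebra_simps)
qed

lemma Eexp_indep:
  assumes "\<And>\<alpha> b. f (\<alpha>(c := b)) = f \<alpha>" "c \<in> set cs"
  shows "Eexp \<omega> cs (\<lambda>\<alpha>. f \<alpha> * g (\<alpha> c)) =
    Eexp \<omega> cs f * (\<omega> (fst c) (snd c) * g True + (1 - \<omega> (fst c) (snd c)) * g False)"
  using assms
proof (induction cs arbitrary: f)
  case Nil then show ?case by simp
next
  case (Cons d cs)
  show ?case
  proof (cases "d = c")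
    case True
    have e: "(\<lambda>\<alpha>. f (\<alpha>(c := b)) * g b) = (\<lambda>\<alpha>. f \<alpha> * g b)" for b
      by (rule ext) (simp only: Cons.prems(1))
    have ec: "Eexp \<omega> cs (\<lambda>\<alpha>. f \<alpha> * k) = k * Eexp \<omega> cs f" for k
      using Eexp_cmult[of \<omega> cs k f] by (simp add: mult.commute)
    have E0: "Eexp \<omega> (d # cs) f = Eexp \<omega> cs f" unfolding True by (rule Eexp_ignore, rule Cons.prems(1))
    have "Eexp \<omega> (d # cs) (\<lambda>\<alpha>. f \<alpha> * g (\<alpha> c)) = \<omega> (fst c) (snd c) * Eexp \<omega> cs (\<lambda>\<alpha>. f \<alpha> * g True)
       + (1 - \<omega> (fst c) (snd c)) * Eexp \<omega> cs (\<lambda>\<alpha>. f \<alpha> * g False)"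
      using True e[of True] e[of False] by simp
    also have "\<dots> = Eexp \<omega> cs f * (\<omega> (fst c) (snd c) * g True + (1 - \<omega> (fst c) (snd c)) * g False)"
      by (simp only: ec) (simp add: algebra_simps)
    finally show ?thesis using E0 by simp
  next
    case False
    then have cin: "c \<in> set cs" using Cons.prems(2) by simp
    have fi: "(\<lambda>\<alpha>. f (\<alpha>(d := b))) (\<alpha>(c := b')) = (\<lambda>\<alpha>. f (\<alpha>(d := b))) \<alpha>" for \<alpha> b b'
      using Cons.prems(1) False by (metis fun_upd_twist)
    have I: "Eexp \<omega> cs (\<lambda>\<alpha>. f (\<alpha>(d := b)) * g (\<alpha> c)) = Eexp \<omega> cs (\<lambda>\<alpha>. f (\<alpha>(d := b))) *
      (\<omega> (fst c) (snd c) * g True + (1 - \<omega> (fst c) (snd c)) * g False)" for b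
      using Cons.IH[of "\<lambda>\<alpha>. f (\<alpha>(d := b))"] fi cin by blast
    have ne: "c \<noteq> d" using False by simp
    have "Eexp \<omega> (d # cs) (\<lambda>\<alpha>. f \<alpha> * g (\<alpha> c)) = \<omega> (fst d) (snd d) * Eexp \<omega> cs (\<lambda>\<alpha>. f (\<alpha>(d := True)) * g (\<alpha> c))
       + (1 - \<omega> (fst d) (snd d)) * Eexp \<omega> cs (\<lambda>\<alpha>. f (\<alpha>(d := False)) * g (\<alpha> c))"
      using ne by simp
    also have "\<dots> = Eexp \<omega> (d # cs) f * (\<omega> (fst c) (snd c) * g True + (1 - \<omega> (fst c) (snd c)) * g False)"
      by (simp only: I Eexp.simps) (simp add: algebra_simps)
    finally show ?thesis .
  qed
qed

definition mono_arr :: "((int \<times> nat \<Rightarrow> bool) \<Rightarrow> real) \<Rightarrow> bool" where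
  "mono_arr f \<longleftrightarrow> (\<forall>\<alpha> \<beta>. (\<forall>c. \<alpha> c \<longrightarrow> \<beta> c) \<longrightarrow> f \<alpha> \<le> f \<beta>)"

lemma Eexp_mono_env:
  assumes "unit_env \<omega>" "unit_env \<omega>'" "\<And>x i. \<omega> x i \<le> \<omega>' x i" "mono_arr f"
  shows "Eexp \<omega> cs f \<le> Eexp \<omega>' cs f"
  using assms(4)
proof (induction cs arbitrary: f)
  case Nil then show ?case by simp
next
  case (Cons c cs)
  let ?q = "\<omega> (fst c) (snd c)" and ?q' = "\<omega>' (fst c) (snd c)"
  let ?f1 = "\<lambda>\<alpha>. f (\<alpha>(c := True))" and ?f0 = "\<lambda>\<alpha>. f (\<alpha>(c := False))"
  have m1: "mono_arr ?f1" and m0: "mono_arr ?f0" using Cons.prems unfolding mono_arr_def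
    by (metis fun_upd_apply)+
  have A: "Eexp \<omega> cs ?f1 \<le> Eexp \<omega>' cs ?f1" using Cons.IH m1 .
  have B: "Eexp \<omega> cs ?f0 \<le> Eexp \<omega>' cs ?f0" using Cons.IH m0 .
  have C: "Eexp \<omega>' cs ?f0 \<le> Eexp \<omega>' cs ?f1"
    by (rule Eexp_mono[OF assms(2)]) (use Cons.prems in \<open>auto simp: mono_arr_def\<close>)
  have q: "0 \<le> ?q" "?q \<le> ?q'" "?q' \<le> 1" "?q \<le> 1"
    using assms(1,2,3) unfolding unit_env_def by auto
  have "?q * Eexp \<omega> cs ?f1 + (1 - ?q) * Eexp \<omega> cs ?f0 \<le> ?q * Eexp \<omega>' cs ?f1 + (1 - ?q) * Eexp \<omega>' cs ?f0"
    using A B q by (simp add: add_mono mult_left_mono)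
  also have "\<dots> = Eexp \<omega>' cs ?f0 + ?q * (Eexp \<omega>' cs ?f1 - Eexp \<omega>' cs ?f0)" by (simp add: algebra_simps)
  also have "\<dots> \<le> Eexp \<omega>' cs ?f0 + ?q' * (Eexp \<omega>' cs ?f1 - Eexp \<omega>' cs ?f0)"
    using C q by (simp add: mult_right_mono)
  also have "\<dots> = ?q' * Eexp \<omega>' cs ?f1 + (1 - ?q') * Eexp \<omega>' cs ?f0" by (simp add: algebra_simps)
  finally show ?case by simp
qed

fun wst :: "(int \<times> nat \<Rightarrow> bool) \<Rightarrow> int \<Rightarrow> nat \<Rightarrow> int \<times> (int \<Rightarrow> nat)" where
  "wst \<alpha> x 0 = (x, \<lambda>_. 0)"
| "wst \<alpha> x (Suc m) = (case wst \<alpha> x m of (y, c) \<Rightarrow>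
      (if \<alpha> (y, c y) then y + 1 else y - 1, c(y := Suc (c y))))"

definition W :: "(int \<times> nat \<Rightarrow> bool) \<Rightarrow> int \<Rightarrow> nat \<Rightarrow> int" where
  "W \<alpha> x m = fst (wst \<alpha> x m)"
definition cnt :: "(int \<times> nat \<Rightarrow> bool) \<Rightarrow> int \<Rightarrow> nat \<Rightarrow> int \<Rightarrow> nat" where
  "cnt \<alpha> x m = snd (wst \<alpha> x m)"

lemma W_0[simp]: "W \<alpha> x 0 = x" and cnt_0[simp]: "cnt \<alpha> x 0 = (\<lambda>_. 0)"
  by (simp_all add: W_def cnt_def)

lemma W_Suc: "W \<alpha> x (Suc m) = (if \<alpha> (W \<alpha> x m, cnt \<alpha> x m (W \<alpha> x m)) then W \<alpha> x m + 1 else W \<alpha> x m - 1)"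
  and cnt_Suc: "cnt \<alpha> x (Suc m) = (cnt \<alpha> x m)(W \<alpha> x m := Suc (cnt \<alpha> x m (W \<alpha> x m)))"
  by (simp_all add: W_def cnt_def split: prod.split)

lemma cnt_card: "cnt \<alpha> x m y = card {j. j < m \<and> W \<alpha> x j = y}"
proof (induction m)
  case 0 then show ?case by simp
next
  case (Suc m)
  have "{j. j < Suc m \<and> W \<alpha> x j = y} = {j. j < m \<and> W \<alpha> x j = y} \<union> (if W \<alpha> x m = y then {m} else {})"
    by (auto simp: less_Suc_eq)
  then show ?case using Suc by (auto simp: cnt_Suc)
qed

lemma W_step: "\<bar>W \<alpha> x (Suc m) - W \<alpha> x m\<bar> = 1"
  by (simp add: W_Suc)

lemma W_bound: "\<bar>W \<alpha> x m - x\<bar> \<le> int m"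
proof (induction m)
  case 0 then show ?case by simp
next
  case (Suc m) then show ?case using W_step[of \<alpha> x m] by linarith
qed

lemma cnt_le: "cnt \<alpha> x m y \<le> m"
proof -
  have "{j. j < m \<and> W \<alpha> x j = y} \<subseteq> {..<m}" by auto
  then show ?thesis unfolding cnt_card using card_mono[of "{..<m}"] by fastforce
qed

lemma cnt_pos_visited: "0 < cnt \<alpha> x m y \<Longrightarrow> \<exists>j<m. W \<alpha> x j = y"
  unfolding cnt_card by (metis (mono_tags, lifting) card.empty empty_Collect_eq less_irrefl)

lemma cnt_sum: "finite S \<Longrightarrow> (\<forall>j<m. W \<alpha> x j \<in> S) \<Longrightarrow> (\<Sum>y\<in>S. cnt \<alpha> x m y) = m"
proof (induction m)
  case 0 then show ?case by simp
next
  case (Suc m)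
  let ?z = "W \<alpha> x m"
  have zS: "?z \<in> S" using Suc.prems by auto
  have "(\<Sum>y\<in>S. cnt \<alpha> x (Suc m) y) = (\<Sum>y\<in>S. cnt \<alpha> x m y + (if y = ?z then 1 else 0))"
    by (rule sum.cong) (auto simp: cnt_Suc)
  also have "\<dots> = (\<Sum>y\<in>S. cnt \<alpha> x m y) + 1"
    using zS Suc.prems(1) by (simp add: sum.distrib)
  finally show ?case using Suc by simp
qed

definition cntR :: "(nat \<Rightarrow> bool) \<Rightarrow> nat \<Rightarrow> nat" where
  "cntR c k = card {i. i < k \<and> c i}"
definition cntL :: "(nat \<Rightarrow> bool) \<Rightarrow> nat \<Rightarrow> nat" where
  "cntL c k = card {i. i < k \<and> \<not> c i}"

lemma cntR_0[simp]: "cntR c 0 = 0" and cntL_0[simp]: "cntL c 0 = 0"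
  by (simp_all add: cntR_def cntL_def)

lemma cntR_Suc: "cntR c (Suc k) = cntR c k + (if c k then 1 else 0)"
proof -
  have "{i. i < Suc k \<and> c i} = {i. i < k \<and> c i} \<union> (if c k then {k} else {})" by (auto simp: less_Suc_eq)
  then show ?thesis by (auto simp: cntR_def)
qed

lemma cntL_Suc: "cntL c (Suc k) = cntL c k + (if c k then 0 else 1)"
proof -
  have "{i. i < Suc k \<and> \<not> c i} = {i. i < k \<and> \<not> c i} \<union> (if c k then {} else {k})" by (auto simp: less_Suc_eq)
  then show ?thesis by (auto simp: cntL_def)
qed

lemma cntRL: "cntR c k + cntL c k = k"
  by (induction k) (auto simp: cntR_Suc cntL_Suc)

lemma cntR_le_arr: "(\<forall>i. c i \<longrightarrow> d i) \<Longrightarrow> cntR c k \<le> cntR d k"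
  unfolding cntR_def by (rule card_mono) auto

lemma cntL_le_arr: "(\<forall>i. c i \<longrightarrow> d i) \<Longrightarrow> cntL d k \<le> cntL c k"
  unfolding cntL_def by (rule card_mono) auto

lemma cntR_mono: "k \<le> k' \<Longrightarrow> cntR c k \<le> cntR c k'"
  unfolding cntR_def by (rule card_mono) auto

lemma cntL_mono: "k \<le> k' \<Longrightarrow> cntL c k \<le> cntL c k'"
  unfolding cntL_def by (rule card_mono) auto

lemma colA:
  assumes "\<forall>i. c i \<longrightarrow> d i" "cntR d v' < cntR c v"
  shows "v' < v \<and> cntL d v' \<le> cntL c v"
proof -
  have "v' < v"
  proof (rule ccontr)
    assume "\<not> v' < v"
    then have "cntR c v \<le> cntR d v" "cntR d v \<le> cntR d v'"
      using cntR_le_arr[OF assms(1)] cntR_mono by auto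
    then show False using assms(2) by simp
  qed
  moreover have "cntL d v' \<le> cntL c v'" by (rule cntL_le_arr[OF assms(1)])
  moreover have "cntL c v' \<le> cntL c v" using \<open>v' < v\<close> cntL_mono by simp
  ultimately show ?thesis by simp
qed

lemma colB:
  assumes "\<forall>i. c i \<longrightarrow> d i" "cntR d v' \<le> cntR c v" "0 < v' \<Longrightarrow> d (v' - 1)"
  shows "v' \<le> v \<and> cntL d v' \<le> cntL c v"
proof -
  have "v' \<le> v"
  proof (rule ccontr)
    assume "\<not> v' \<le> v"
    then have v: "v < v'" "0 < v'" by auto
    then have "cntR d v' = cntR d (v' - 1) + 1" using assms(3) cntR_Suc[of d "v' - 1"] by simp
    moreover have "cntR c v \<le> cntR d v" "cntR d v \<le> cntR d (v' - 1)"
      using cntR_le_arr[OF assms(1)] cntR_mono v by auto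
    ultimately show False using assms(2) by simp
  qed
  moreover have "cntL d v' \<le> cntL c v'" by (rule cntL_le_arr[OF assms(1)])
  moreover have "cntL c v' \<le> cntL c v" using \<open>v' \<le> v\<close> cntL_mono by simp
  ultimately show ?thesis by simp
qed

definition col :: "(int \<times> nat \<Rightarrow> bool) \<Rightarrow> int \<Rightarrow> nat \<Rightarrow> bool" where
  "col \<alpha> y = (\<lambda>i. \<alpha> (y, i))"

definition Rv where "Rv \<alpha> x m y = cntR (col \<alpha> y) (cnt \<alpha> x m y)"
definition Lv where "Lv \<alpha> x m y = cntL (col \<alpha> y) (cnt \<alpha> x m y)"

lemma edge:
  "int (Rv \<alpha> x m y) - int (Lv \<alpha> x m (y + 1)) =
     (if x \<le> y \<and> y < W \<alpha> x m then 1 else 0) - (if W \<alpha> x m \<le> y \<and> y < x then 1 else 0)"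
proof (induction m arbitrary: y)
  case 0 then show ?case by (simp add: Rv_def Lv_def)
next
  case (Suc m)
  let ?z = "W \<alpha> x m" and ?k = "cnt \<alpha> x m (W \<alpha> x m)"
  have R: "Rv \<alpha> x (Suc m) y = Rv \<alpha> x m y + (if y = ?z \<and> \<alpha> (?z, ?k) then 1 else 0)" for y
    by (auto simp: Rv_def cnt_Suc cntR_Suc col_def)
  have L: "Lv \<alpha> x (Suc m) y = Lv \<alpha> x m y + (if y = ?z \<and> \<not> \<alpha> (?z, ?k) then 1 else 0)" for y
    by (auto simp: Lv_def cnt_Suc cntL_Suc col_def)
  show ?case
    using Suc.IH[of y] R[of y] L[of "y+1"] W_Suc[of \<alpha> x m]
    by (auto split: if_splits)
qed

lemma last_right:
  "y < W \<alpha> x m \<Longrightarrow> 0 < cnt \<alpha> x m y \<Longrightarrow> \<alpha> (y, cnt \<alpha> x m y - 1)"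
proof (induction m arbitrary: y)
  case 0 then show ?case by simp
next
  case (Suc m)
  let ?z = "W \<alpha> x m" and ?k = "cnt \<alpha> x m (W \<alpha> x m)"
  show ?case
  proof (cases "\<alpha> (?z, ?k)")
    case True
    then have Wz: "W \<alpha> x (Suc m) = ?z + 1" by (simp add: W_Suc)
    show ?thesis
    proof (cases "y = ?z")
      case True
      then show ?thesis using \<open>\<alpha> (?z, ?k)\<close> by (simp add: cnt_Suc)
    next
      case False
      then show ?thesis using Suc Wz by (simp add: cnt_Suc)
    qed
  next
    case False
    then have Wz: "W \<alpha> x (Suc m) = ?z - 1" by (simp add: W_Suc)
    then have "y \<noteq> ?z" "y < ?z" using Suc.prems by auto
    then show ?thesis using Suc by (simp add: cnt_Suc)
  qed
qed

lemma hit_first: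
  assumes le: "\<forall>c. \<alpha> c \<longrightarrow> \<beta> c" and hit: "W \<alpha> s T = a"
    and below: "\<forall>m<T. W \<alpha> s m < a" and sa: "s < a"
  shows "\<exists>m\<le>T. a \<le> W \<beta> s m"
proof (rule ccontr)
  assume "\<not> ?thesis"
  then have bb: "\<forall>m\<le>T. W \<beta> s m < a" by auto
  define z where "z = W \<beta> s T"
  have za: "z < a" using bb z_def by auto
  define v where "v = cnt \<alpha> s T"
  define v' where "v' = cnt \<beta> s T"
  have leC: "\<forall>i. col \<alpha> y i \<longrightarrow> col \<beta> y i" for y using le by (simp add: col_def)
  have vA: "v y = 0" if "a \<le> y" for y
    using cnt_pos_visited[of \<alpha> s T y] below that unfolding v_def by fastforce
  have vB: "v' y = 0" if "a \<le> y" for y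
  proof (rule ccontr)
    assume "v' y \<noteq> 0"
    then obtain j where "j < T" "W \<beta> s j = y" using cnt_pos_visited[of \<beta> s T y] unfolding v'_def by auto
    then have "W \<beta> s j < a" using bb[rule_format, of j] by simp
    then show False using that \<open>W \<beta> s j = y\<close> by simp
  qed
  have edgeA: "int (Rv \<alpha> s T y) = int (Lv \<alpha> s T (y + 1)) + (if s \<le> y then 1 else 0)" if "y < a" for y
    using edge[of \<alpha> s T y] hit that by auto
  have edgeB: "int (Rv \<beta> s T y) = int (Lv \<beta> s T (y + 1)) + (if s \<le> y \<and> y < z then 1 else 0)
      - (if z \<le> y \<and> y < s then 1 else 0)" for y
    using edge[of \<beta> s T y] z_def by auto
  have lastB: "col \<beta> y (v' y - 1)" if "y < z" "0 < v' y" for y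
    using last_right[of y \<beta> s T] that unfolding z_def v'_def col_def by auto
  have step: "Lv \<beta> s T y \<le> Lv \<alpha> s T y \<and> v' y \<le> v y \<and> (z \<le> y \<longrightarrow> v' y < v y)"
    if ya: "y < a" and IH: "Lv \<beta> s T (y + 1) \<le> Lv \<alpha> s T (y + 1)" for y
  proof (cases "z \<le> y")
    case True
    have "Rv \<beta> s T y < Rv \<alpha> s T y"
      using edgeA[OF ya] edgeB[of y] True IH by (auto split: if_splits)
    then have "v' y < v y \<and> cntL (col \<beta> y) (v' y) \<le> cntL (col \<alpha> y) (v y)"
      by (intro colA[OF leC]) (simp add: Rv_def v_def v'_def)
    then show ?thesis using True by (simp add: Lv_def v_def v'_def)
  next
    case False
    have "Rv \<beta> s T y \<le> Rv \<alpha> s T y"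
      using edgeA[OF ya] edgeB[of y] False IH by (auto split: if_splits)
    then have "v' y \<le> v y \<and> cntL (col \<beta> y) (v' y) \<le> cntL (col \<alpha> y) (v y)"
      by (intro colB[OF leC]) (use lastB False in \<open>auto simp: Rv_def v_def v'_def\<close>)
    then show ?thesis using False by (simp add: Lv_def v_def v'_def)
  qed
  have claim: "Lv \<beta> s T (a - 1 - int k) \<le> Lv \<alpha> s T (a - 1 - int k) \<and> v' (a - 1 - int k) \<le> v (a - 1 - int k)
     \<and> (k = 0 \<longrightarrow> v' (a - 1 - int k) < v (a - 1 - int k))" for k
  proof (induction k)
    case 0
    have "Lv \<beta> s T a = 0" using vB[of a] by (simp add: Lv_def v'_def)
    then have "Lv \<beta> s T (a - 1 + 1) \<le> Lv \<alpha> s T (a - 1 + 1)" by simp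
    from step[OF _ this] za show ?case by simp
  next
    case (Suc k)
    have e: "a - 1 - int (Suc k) + 1 = a - 1 - int k" by simp
    have "Lv \<beta> s T (a - 1 - int (Suc k) + 1) \<le> Lv \<alpha> s T (a - 1 - int (Suc k) + 1)"
      unfolding e using Suc.IH by simp
    from step[OF _ this] show ?case by simp
  qed
  define S where "S = {s - int T .. a - 1}"
  have fS: "finite S" by (simp add: S_def)
  have inS: "W \<gamma> s j \<in> S" if "j < T" "W \<gamma> s j < a" for \<gamma> j
    using W_bound[of \<gamma> s j] that unfolding S_def by auto
  have sumA: "(\<Sum>y\<in>S. v y) = T" unfolding v_def
    by (rule cnt_sum[OF fS]) (use inS below in auto)
  have sumB: "(\<Sum>y\<in>S. v' y) = T" unfolding v'_def
    by (rule cnt_sum[OF fS]) (use inS bb in auto)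
  have le_all: "v' y \<le> v y" if "y \<in> S" for y
  proof -
    have "y = a - 1 - int (nat (a - 1 - y))" using that by (simp add: S_def)
    then show ?thesis using claim[of "nat (a - 1 - y)"] by metis
  qed
  have "a - 1 \<in> S" using sa by (simp add: S_def)
  moreover have "v' (a - 1) < v (a - 1)" using claim[of 0] by simp
  ultimately have "(\<Sum>y\<in>S. v' y) < (\<Sum>y\<in>S. v y)"
    using sum_strict_mono_ex1[OF fS, of v' v] le_all by blast
  then show False using sumA sumB by simp
qed

lemma hit_mono:
  assumes le: "\<forall>c. \<alpha> c \<longrightarrow> \<beta> c" and h: "\<exists>m\<le>n. a \<le> W \<alpha> s m"
  shows "\<exists>m\<le>n. a \<le> W \<beta> s m"
proof (cases "a \<le> s")
  case True then show ?thesis by (intro exI[of _ 0]) simp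
next
  case False
  define T where "T = (LEAST m. a \<le> W \<alpha> s m)"
  have T1: "a \<le> W \<alpha> s T" unfolding T_def using h by (meson LeastI)
  have T2: "T \<le> n" unfolding T_def using h by (meson Least_le le_trans)
  have T3: "\<forall>m<T. W \<alpha> s m < a" unfolding T_def using not_less_Least by fastforce
  have "T \<noteq> 0"
  proof
    assume "T = 0" then show False using T1 False by simp
  qed
  then obtain T' where T': "T = Suc T'" by (cases T) auto
  have "W \<alpha> s T' < a" using T3 T' by simp
  then have "W \<alpha> s T = a" using T1 W_step[of \<alpha> s T'] T' by auto
  then obtain m where "m \<le> T" "a \<le> W \<beta> s m"
    using hit_first[OF le _ T3] False by force
  then show ?thesis using T2 by (intro exI[of _ m]) simp
qed

definition refl_arr :: "(int \<times> nat \<Rightarrow> bool) \<Rightarrow> int \<times> nat \<Rightarrow> bool" where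
  "refl_arr \<alpha> = (\<lambda>(y, i). \<not> \<alpha> (- y, i))"

lemma wst_refl: "wst (refl_arr \<alpha>) (- x) m = (- W \<alpha> x m, \<lambda>y. cnt \<alpha> x m (- y))"
proof (induction m)
  case 0 then show ?case by simp
next
  case (Suc m)
  show ?case using Suc
    by (auto simp: W_Suc cnt_Suc refl_arr_def fun_eq_iff)
qed

lemma W_refl: "W (refl_arr \<alpha>) (- x) m = - W \<alpha> x m"
  using wst_refl by (simp add: W_def)

lemma hit_mono_min:
  assumes le: "\<forall>c. \<alpha> c \<longrightarrow> \<beta> c" and h: "\<exists>m\<le>n. W \<beta> s m \<le> b"
  shows "\<exists>m\<le>n. W \<alpha> s m \<le> b"
proof -
  have le': "\<forall>c. refl_arr \<beta> c \<longrightarrow> refl_arr \<alpha> c" using le by (auto simp: refl_arr_def)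
  have "\<exists>m\<le>n. - b \<le> W (refl_arr \<beta>) (- s) m" using h by (auto simp: W_refl)
  from hit_mono[OF le' this] show ?thesis by (auto simp: W_refl)
qed

definition arrbox :: "int \<Rightarrow> nat \<Rightarrow> (int \<times> nat) list" where
  "arrbox x N = List.product [x - int N .. x + int N] [0..<Suc N]"

lemma in_box: "\<bar>y - x\<bar> \<le> int N \<Longrightarrow> i \<le> N \<Longrightarrow> (y, i) \<in> set (arrbox x N)"
  by (auto simp: arrbox_def)

lemma agree:
  assumes "\<forall>j<m. \<beta> (W \<alpha> x j, cnt \<alpha> x j (W \<alpha> x j)) = \<alpha> (W \<alpha> x j, cnt \<alpha> x j (W \<alpha> x j))"
  shows "wst \<beta> x m = wst \<alpha> x m"
  using assms
proof (induction m)
  case 0 then show ?case by simp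
next
  case (Suc m)
  then have IH: "wst \<beta> x m = wst \<alpha> x m" by simp
  have r: "\<beta> (W \<alpha> x m, cnt \<alpha> x m (W \<alpha> x m)) = \<alpha> (W \<alpha> x m, cnt \<alpha> x m (W \<alpha> x m))"
    using Suc.prems by simp
  obtain y c where yc: "wst \<alpha> x m = (y, c)" by fastforce
  show ?case using IH r yc by (simp add: W_def cnt_def)
qed

lemma path_prob_Suc: "path_prob \<omega> x p (Suc n) = path_prob \<omega> x p n * step_prob \<omega> p n"
  by (simp add: path_prob_def)

lemma card_prev_le: "card {j. j < n \<and> P j} \<le> (n::nat)"
proof -
  have "{j. j < n \<and> P j} \<subseteq> {..<n}" by auto
  from card_mono[OF finite_lessThan this] show ?thesis by simp
qed

lemma card_prev_less:
  fixes j n :: nat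
  assumes "j < n" "p j = p n"
  shows "card {i. i < j \<and> p i = p j} < card {i. i < n \<and> p i = p n}"
proof -
  have sub: "{i. i < j \<and> p i = p j} \<subseteq> {i. i < n \<and> p i = p n}"
  proof
    fix i assume "i \<in> {i. i < j \<and> p i = p j}"
    then have "i < j" "p i = p j" by auto
    then show "i \<in> {i. i < n \<and> p i = p n}" using assms by simp
  qed
  have "j \<in> {i. i < n \<and> p i = p n}" "j \<notin> {i. i < j \<and> p i = p j}" using assms by auto
  then have "{i. i < j \<and> p i = p j} \<subset> {i. i < n \<and> p i = p n}" using sub by blast
  then show ?thesis by (rule psubset_card_mono[rotated]) simp
qed

lemma match_ignore:
  assumes m: "\<forall>k\<le>n. W \<alpha> x k = p k"
    and ag: "\<And>c. c \<noteq> (p n, card {j. j < n \<and> p j = p n}) \<Longrightarrow> \<gamma> c = \<alpha> c"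
  shows "\<forall>k\<le>n. W \<gamma> x k = p k"
proof (intro allI impI)
  fix k assume kn: "k \<le> n"
  have "\<forall>j<k. \<gamma> (W \<alpha> x j, cnt \<alpha> x j (W \<alpha> x j)) = \<alpha> (W \<alpha> x j, cnt \<alpha> x j (W \<alpha> x j))"
  proof (intro allI impI)
    fix j assume "j < k"
    then have jn: "j < n" using kn by simp
    have Wj: "W \<alpha> x j = p j" using m jn by auto
    have cj: "cnt \<alpha> x j (W \<alpha> x j) = card {i. i < j \<and> p i = p j}"
    proof -
      have "{i. i < j \<and> W \<alpha> x i = W \<alpha> x j} = {i. i < j \<and> p i = p j}" using m jn Wj by auto
      then show ?thesis unfolding cnt_card by simp
    qed
    have neq: "(W \<alpha> x j, cnt \<alpha> x j (W \<alpha> x j)) \<noteq> (p n, card {j. j < n \<and> p j = p n})"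
    proof (cases "p j = p n")
      case True
      have "card {i. i < j \<and> p i = p j} < card {i. i < n \<and> p i = p n}"
        by (rule card_prev_less[OF jn True])
      then show ?thesis unfolding cj by simp
    next
      case False
      then show ?thesis unfolding Wj by simp
    qed
    show "\<gamma> (W \<alpha> x j, cnt \<alpha> x j (W \<alpha> x j)) = \<alpha> (W \<alpha> x j, cnt \<alpha> x j (W \<alpha> x j))"
      by (rule ag[OF neq])
  qed
  from agree[OF this] have "W \<gamma> x k = W \<alpha> x k" by (simp add: W_def)
  then show "W \<gamma> x k = p k" using m[rule_format, OF kn] by simp
qed

lemma link:
  assumes "n \<le> N"
  shows "path_prob \<omega> x p n = Eexp \<omega> (arrbox x N) (\<lambda>\<alpha>. if (\<forall>k\<le>n. W \<alpha> x k = p k) then 1 else 0)"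
  using assms
proof (induction n)
  case 0
  have "path_prob \<omega> x p 0 = (if p 0 = x then 1 else 0)" by (simp add: path_prob_def)
  then show ?case by (simp add: Eexp_const)
next
  case (Suc n)
  define c0 where "c0 = (p n, card {j. j < n \<and> p j = p n})"
  define f where "f = (\<lambda>\<alpha>. if (\<forall>k\<le>n. W \<alpha> x k = p k) then 1 else (0::real))"
  define g where "g = (\<lambda>b. if p (Suc n) = (if b then p n + 1 else p n - 1) then 1 else (0::real))"
  have IH: "path_prob \<omega> x p n = Eexp \<omega> (arrbox x N) f" using Suc by (simp add: f_def)
  have split: "(if (\<forall>k\<le>Suc n. W \<alpha> x k = p k) then 1 else 0) = f \<alpha> * g (\<alpha> c0)" for \<alpha>
  proof (cases "\<forall>k\<le>n. W \<alpha> x k = p k")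
    case True
    have c: "cnt \<alpha> x n (W \<alpha> x n) = card {j. j < n \<and> p j = p n}"
    proof -
      have "{i. i < n \<and> W \<alpha> x i = W \<alpha> x n} = {i. i < n \<and> p i = p n}" using True by auto
      then show ?thesis unfolding cnt_card by simp
    qed
    have Wn: "W \<alpha> x n = p n" using True by simp
    have "(\<forall>k\<le>Suc n. W \<alpha> x k = p k) \<longleftrightarrow> W \<alpha> x (Suc n) = p (Suc n)"
      using True by (auto simp: le_Suc_eq)
    then show ?thesis using True c Wn by (simp add: f_def g_def c0_def W_Suc)
  next
    case False
    then have "\<not> (\<forall>k\<le>Suc n. W \<alpha> x k = p k)" by (meson le_SucI)
    then have "(if (\<forall>k\<le>Suc n. W \<alpha> x k = p k) then 1 else 0) = (0::real)" by simp
    moreover have "f \<alpha> = 0" using False by (simp add: f_def)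
    ultimately show ?thesis by simp
  qed
  have ign: "f (\<alpha>(c0 := b)) = f \<alpha>" for \<alpha> b
  proof -
    have "(\<forall>k\<le>n. W (\<alpha>(c0 := b)) x k = p k) \<longleftrightarrow> (\<forall>k\<le>n. W \<alpha> x k = p k)"
    proof
      assume "\<forall>k\<le>n. W (\<alpha>(c0 := b)) x k = p k"
      from match_ignore[OF this, of \<alpha>] show "\<forall>k\<le>n. W \<alpha> x k = p k" by (simp add: c0_def)
    next
      assume "\<forall>k\<le>n. W \<alpha> x k = p k"
      from match_ignore[OF this, of "\<alpha>(c0 := b)"] show "\<forall>k\<le>n. W (\<alpha>(c0 := b)) x k = p k"
        by (simp add: c0_def)
    qed
    then show ?thesis by (simp add: f_def)
  qed
  have step: "step_prob \<omega> p n = \<omega> (fst c0) (snd c0) * g True + (1 - \<omega> (fst c0) (snd c0)) * g False"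
    by (simp add: step_prob_def g_def c0_def Let_def)
  show ?case
  proof (cases "\<exists>\<alpha>. \<forall>k\<le>n. W \<alpha> x k = p k")
    case True
    then obtain \<alpha> where \<alpha>: "\<forall>k\<le>n. W \<alpha> x k = p k" by auto
    have "\<bar>p n - x\<bar> \<le> int N" using W_bound[of \<alpha> x n] \<alpha> Suc.prems by auto
    moreover have "card {j. j < n \<and> p j = p n} \<le> N"
      using card_prev_le[of n "\<lambda>j. p j = p n"] Suc.prems by linarith
    ultimately have cin: "c0 \<in> set (arrbox x N)" unfolding c0_def by (rule in_box)
    have "Eexp \<omega> (arrbox x N) (\<lambda>\<alpha>. if (\<forall>k\<le>Suc n. W \<alpha> x k = p k) then 1 else 0)
        = Eexp \<omega> (arrbox x N) (\<lambda>\<alpha>. f \<alpha> * g (\<alpha> c0))" by (simp only: split)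
    also have "\<dots> = Eexp \<omega> (arrbox x N) f * step_prob \<omega> p n"
      unfolding step by (rule Eexp_indep[OF ign cin])
    finally show ?thesis using IH by (simp add: path_prob_Suc)
  next
    case False
    then have f0: "f = (\<lambda>_. 0)" by (auto simp: f_def)
    have nm: "\<not> (\<forall>k\<le>Suc n. W \<alpha> x k = p k)" for \<alpha> using False le_SucI by blast
    have "(\<lambda>\<alpha>. if (\<forall>k\<le>Suc n. W \<alpha> x k = p k) then 1 else (0::real)) = (\<lambda>_. 0)"
      using nm by (simp add: fun_eq_iff)
    then show ?thesis using IH f0 by (simp add: path_prob_Suc Eexp_const)
  qed
qed

lemma law_comp:
  assumes "walk_law \<omega> x M"
  shows "(\<lambda>X. X k) \<in> measurable M (count_space UNIV)"
proof -
  have sM: "sets M = sets (PiM UNIV (\<lambda>_::nat. count_space (UNIV::int set)))"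
    using assms by (simp add: walk_law_def path_M_def)
  have "(\<lambda>X. X k) \<in> measurable (PiM UNIV (\<lambda>_::nat. count_space (UNIV::int set))) (count_space UNIV)"
    using measurable_component_singleton[of k UNIV "\<lambda>_::nat. count_space (UNIV::int set)"] by simp
  then show ?thesis using measurable_cong_sets[OF sM refl] by blast
qed

lemma law_coord_sets:
  assumes "walk_law \<omega> x M"
  shows "{X \<in> space M. P (X k)} \<in> sets M"
proof -
  have "{X \<in> space M. P (X k)} = (\<lambda>X. X k) -` {y. P y} \<inter> space M" by auto
  then show ?thesis using measurable_sets[OF law_comp[OF assms], of "{y. P y}"] by simp
qed

lemma law_cyl_sets:
  assumes "walk_law \<omega> x M"
  shows "{X \<in> space M. \<forall>k\<le>n. X k = p k} \<in> sets M"
proof -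
  have "{X \<in> space M. \<forall>k\<le>n. X k = p k} = (\<Inter>k\<in>{..n}. {X \<in> space M. X k = p k})" by auto
  moreover have "(\<Inter>k\<in>{..n}. {X \<in> space M. X k = p k}) \<in> sets M"
    by (rule sets.finite_INT) (auto intro: law_coord_sets[OF assms])
  ultimately show ?thesis by simp
qed

lemma law_event:
  fixes Q :: "(nat \<Rightarrow> int) \<Rightarrow> bool"
  assumes law: "walk_law \<omega> x M"
    and dep: "\<And>X Y. (\<forall>k\<le>n. X k = Y k) \<Longrightarrow> Q X = Q Y"
    and Ems: "{X \<in> space M. Q X} \<in> sets M"
  shows "measure M {X \<in> space M. Q X} = Eexp \<omega> (arrbox x n) (\<lambda>\<alpha>. if Q (W \<alpha> x) then 1 else 0)"
proof -
  interpret prob_space M using law by (simp add: walk_law_def)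
  define cs where "cs = arrbox x n"
  define Cfg where "Cfg = (\<lambda>T c. c \<in> T) ` Pow (set cs)"
  define pw where "pw = (\<lambda>\<alpha> k. W \<alpha> x (min k n))"
  define P where "P = pw ` Cfg"
  define cyl where "cyl = (\<lambda>p. {X \<in> space M. \<forall>k\<le>n. X k = p k})"
  define mt where "mt = (\<lambda>p \<alpha>. if (\<forall>k\<le>n. W \<alpha> x k = p k) then 1 else (0::real))"
  have finP: "finite P" unfolding P_def Cfg_def by simp
  have cyl_sets: "cyl p \<in> sets M" for p unfolding cyl_def by (rule law_cyl_sets[OF law])
  have cyl_meas: "measure M (cyl p) = path_prob \<omega> x p n" for p
    using law unfolding walk_law_def cyl_def by simp
  have disj: "disjoint_family_on cyl P"
    unfolding disjoint_family_on_def
  proof (intro ballI impI)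
    fix p q assume pq: "p \<in> P" "q \<in> P" "p \<noteq> q"
    then obtain \<alpha> \<beta> where "p = pw \<alpha>" "q = pw \<beta>" unfolding P_def by auto
    then have pm: "p k = p (min k n)" "q k = q (min k n)" for k by (simp_all add: pw_def)
    obtain k0 where "p k0 \<noteq> q k0" using pq(3) by (auto simp: fun_eq_iff)
    then have "p (min k0 n) \<noteq> q (min k0 n)" using pm[of k0] by simp
    then obtain k where "k \<le> n" "p k \<noteq> q k" by (meson min.cobounded2)
    then show "cyl p \<inter> cyl q = {}" unfolding cyl_def by auto
  qed
  have key: "(\<Sum>p\<in>P. (if R p then mt p \<alpha> else 0)) = (if R (pw \<alpha>) then 1 else 0)"
    if supp: "\<forall>c. c \<notin> set cs \<longrightarrow> \<not> \<alpha> c" for \<alpha> and R :: "(nat \<Rightarrow> int) \<Rightarrow> bool"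
  proof -
    have aC: "\<alpha> \<in> Cfg" unfolding Cfg_def
    proof
      show "\<alpha> = (\<lambda>c. c \<in> {c. \<alpha> c})" by simp
      show "{c. \<alpha> c} \<in> Pow (set cs)" using supp by auto
    qed
    have pin: "pw \<alpha> \<in> P" unfolding P_def using aC by simp
    have mt_eq: "mt p \<alpha> = (if p = pw \<alpha> then 1 else 0)" if "p \<in> P" for p
    proof -
      obtain \<beta> where pb: "p = pw \<beta>" using \<open>p \<in> P\<close> unfolding P_def by auto
      have "(\<forall>k\<le>n. W \<alpha> x k = p k) \<longleftrightarrow> p = pw \<alpha>"
      proof
        assume h: "\<forall>k\<le>n. W \<alpha> x k = p k"
        show "p = pw \<alpha>"
        proof
          fix k
          have "p k = p (min k n)" unfolding pb pw_def by simp
          also have "\<dots> = W \<alpha> x (min k n)" using h by simp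
          finally show "p k = pw \<alpha> k" unfolding pw_def .
        qed
      next
        assume "p = pw \<alpha>" then show "\<forall>k\<le>n. W \<alpha> x k = p k" by (simp add: pw_def)
      qed
      then show ?thesis by (simp add: mt_def)
    qed
    have "(\<Sum>p\<in>P. (if R p then mt p \<alpha> else 0)) = (\<Sum>p\<in>P. (if p = pw \<alpha> then (if R p then 1 else 0) else 0))"
      by (rule sum.cong) (auto simp: mt_eq)
    also have "\<dots> = (if R (pw \<alpha>) then 1 else 0)" using finP pin by (simp add: sum.delta)
    finally show ?thesis .
  qed
  have sumE: "(\<Sum>p\<in>P. (if R p then path_prob \<omega> x p n else 0)) = Eexp \<omega> cs (\<lambda>\<alpha>. if R (pw \<alpha>) then 1 else 0)"
    for R :: "(nat \<Rightarrow> int) \<Rightarrow> bool"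
  proof -
    have "(\<Sum>p\<in>P. (if R p then path_prob \<omega> x p n else 0)) = (\<Sum>p\<in>P. Eexp \<omega> cs (\<lambda>\<alpha>. if R p then mt p \<alpha> else 0))"
      by (rule sum.cong) (auto simp: link[of n n] cs_def mt_def Eexp_const)
    also have "\<dots> = Eexp \<omega> cs (\<lambda>\<alpha>. \<Sum>p\<in>P. (if R p then mt p \<alpha> else 0))" by (rule Eexp_sum[symmetric])
    also have "\<dots> = Eexp \<omega> cs (\<lambda>\<alpha>. if R (pw \<alpha>) then 1 else 0)"
      by (rule Eexp_cong_supp) (rule key)
    finally show ?thesis .
  qed
  define U where "U = (\<Union>p\<in>P. cyl p)"
  have U_sets: "U \<in> sets M" unfolding U_def using finP cyl_sets by (intro sets.finite_UN) auto
  have mU_sum: "measure M (\<Union>p\<in>S. cyl p) = (\<Sum>p\<in>S. path_prob \<omega> x p n)" if "S \<subseteq> P" for S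
  proof -
    have "finite S" using finP that finite_subset by auto
    moreover have "disjoint_family_on cyl S" using disj that disjoint_family_on_mono by blast
    ultimately show ?thesis using measure_finite_Union[of S cyl M] cyl_sets cyl_meas by auto
  qed
  have "measure M U = (\<Sum>p\<in>P. (if True then path_prob \<omega> x p n else 0))" using mU_sum[of P] U_def by simp
  also have "\<dots> = 1" using sumE[of "\<lambda>_. True"] by (simp add: Eexp_const)
  finally have mU: "measure M U = 1" .
  let ?E = "{X \<in> space M. Q X}"
  have QU: "?E \<inter> U = (\<Union>p\<in>{p\<in>P. Q p}. cyl p)"
  proof -
    have QX: "Q X = Q p" if "X \<in> cyl p" for X p using dep[of X p] that by (simp add: cyl_def)
    show ?thesis unfolding U_def
    proof (intro equalityI subsetI)
      fix X assume "X \<in> ?E \<inter> (\<Union>p\<in>P. cyl p)"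
      then obtain p where "p \<in> P" "X \<in> cyl p" "Q X" by auto
      then show "X \<in> (\<Union>p\<in>{p\<in>P. Q p}. cyl p)" using QX by blast
    next
      fix X assume "X \<in> (\<Union>p\<in>{p\<in>P. Q p}. cyl p)"
      then obtain p where "p \<in> P" "X \<in> cyl p" "Q p" by auto
      moreover have "X \<in> space M" using \<open>X \<in> cyl p\<close> by (simp add: cyl_def)
      ultimately show "X \<in> ?E \<inter> (\<Union>p\<in>P. cyl p)" using QX by blast
    qed
  qed
  have m1: "measure M (?E \<inter> U) = (\<Sum>p\<in>P. (if Q p then path_prob \<omega> x p n else 0))"
    unfolding QU using mU_sum[of "{p\<in>P. Q p}"] finP by (simp add: sum.inter_filter)
  have m2: "measure M (?E - U) = 0"
  proof -
    have "measure M (?E - U) \<le> measure M (space M - U)"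
      by (rule finite_measure_mono) (use U_sets in auto)
    also have "\<dots> = 0" using prob_compl[OF U_sets] mU by simp
    finally show ?thesis using measure_nonneg[of M "?E - U"] by linarith
  qed
  have "measure M ?E = measure M ((?E \<inter> U) \<union> (?E - U))" by (simp add: Int_Diff_Un)
  also have "\<dots> = measure M (?E \<inter> U) + measure M (?E - U)"
    by (rule finite_measure_Union) (use Ems U_sets in auto)
  also have "\<dots> = Eexp \<omega> cs (\<lambda>\<alpha>. if Q (pw \<alpha>) then 1 else 0)" using m1 m2 sumE[of Q] by simp
  also have "\<dots> = Eexp \<omega> cs (\<lambda>\<alpha>. if Q (W \<alpha> x) then 1 else 0)"
  proof -
    have "Q (pw \<alpha>) = Q (W \<alpha> x)" for \<alpha> by (rule dep) (simp add: pw_def)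
    then show ?thesis by simp
  qed
  finally show ?thesis by (simp add: cs_def)
qed

lemma ev_measure:
  assumes "prob_space M" and G: "\<And>n. G n \<in> sets M"
    and ae: "AE X in M. eventually (\<lambda>n. X \<in> G n) sequentially"
  shows "eventually (\<lambda>n. measure M (G n) > 1/2) sequentially"
proof -
  interpret prob_space M by fact
  define B where "B = (\<lambda>n. \<Inter>m\<in>{n..}. G m)"
  have Bs: "B n \<in> sets M" for n unfolding B_def
    by (rule sets.countable_INT) (use G in auto)
  have inc: "incseq B" unfolding B_def incseq_def by auto
  have BG: "B n \<subseteq> G n" for n unfolding B_def by auto
  have US: "(\<Union>n. B n) \<in> sets M" using Bs by auto
  have "AE X in M. X \<in> (\<Union>n. B n)"
    using ae by (rule AE_mp) (auto simp: eventually_sequentially B_def)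
  then have "measure M (\<Union>n. B n) = 1" using prob_eq_1[OF US] by simp
  then have lim: "(\<lambda>n. measure M (B n)) \<longlonglongrightarrow> 1"
    using finite_Lim_measure_incseq[of B] Bs inc by auto
  have "eventually (\<lambda>n. measure M (B n) > 1/2) sequentially"
    using order_tendstoD(1)[OF lim, of "1/2"] by simp
  then show ?thesis
  proof (rule eventually_mono)
    fix n assume "measure M (B n) > 1/2"
    moreover have "measure M (B n) \<le> measure M (G n)" by (rule finite_measure_mono[OF BG G])
    ultimately show "measure M (G n) > 1/2" by simp
  qed
qed

lemma contra:
  assumes P1: "prob_space M1" and P2: "prob_space M2"
    and G1: "\<And>n. G1 n \<in> sets M1" and G2: "\<And>n. G2 n \<in> sets M2"
    and le: "\<And>n. measure M1 (G1 n) \<le> measure M2 (G2 n)"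
    and ae1: "AE X in M1. eventually (\<lambda>n. X \<in> G1 n) sequentially"
    and ae2: "AE X in M2. eventually (\<lambda>n. X \<notin> G2 n) sequentially"
  shows False
proof -
  interpret p2: prob_space M2 by fact
  have e1: "eventually (\<lambda>n. measure M1 (G1 n) > 1/2) sequentially"
    by (rule ev_measure[OF P1 G1 ae1])
  have ae2': "AE X in M2. eventually (\<lambda>n. X \<in> space M2 - G2 n) sequentially"
    using ae2 AE_space[of M2] by (rule AE_mp[OF AE_conjI]) (auto elim: eventually_mono)
  have e2: "eventually (\<lambda>n. measure M2 (space M2 - G2 n) > 1/2) sequentially"
    by (rule ev_measure[OF P2 _ ae2']) (use G2 in auto)
  obtain n where "measure M1 (G1 n) > 1/2" "measure M2 (space M2 - G2 n) > 1/2"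
    using eventually_happens'[OF sequentially_bot eventually_conj[OF e1 e2]] by auto
  moreover have "measure M2 (space M2 - G2 n) = 1 - measure M2 (G2 n)"
    using p2.prob_compl[OF G2] by simp
  ultimately show False using le[of n] by simp
qed

lemma F1:
  fixes x :: "nat \<Rightarrow> real"
  assumes "(\<lambda>n. x n / real n) \<longlonglongrightarrow> v" "c < v"
  shows "eventually (\<lambda>n. c * real n < x n) sequentially"
proof -
  have "eventually (\<lambda>n. c < x n / real n) sequentially" using order_tendstoD(1)[OF assms] .
  moreover have "eventually (\<lambda>n. 0 < n) sequentially" by (simp add: eventually_gt_at_top)
  ultimately show ?thesis
    by eventually_elim (simp add: pos_less_divide_eq mult.commute)
qed

lemma F2:
  fixes x :: "nat \<Rightarrow> real"
  assumes lim: "(\<lambda>n. x n / real n) \<longlonglongrightarrow> v" and vc: "v < c" and c0: "0 < c"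
  shows "eventually (\<lambda>n. \<forall>m\<le>n. x m < c * real n) sequentially"
proof -
  have "eventually (\<lambda>n. x n / real n < c) sequentially" using order_tendstoD(2)[OF lim vc] .
  then obtain N0 where N0: "\<And>m. m \<ge> N0 \<Longrightarrow> x m / real m < c" by (auto simp: eventually_sequentially)
  define N where "N = max N0 1"
  define K where "K = (\<Sum>j<N. \<bar>x j\<bar>)"
  have xK: "x m \<le> K" if "m < N" for m
  proof -
    have "x m \<le> \<bar>x m\<bar>" by simp
    also have "\<bar>x m\<bar> \<le> K" unfolding K_def using that
      by (intro member_le_sum) auto
    finally show ?thesis .
  qed
  have big: "eventually (\<lambda>n. K < c * real n) sequentially"
  proof -
    obtain n0 :: nat where "K / c < real n0" using reals_Archimedean2 by blast
    then have "K < c * real n0" using c0 by (simp add: pos_divide_less_eq mult.commute)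
    then show ?thesis unfolding eventually_sequentially
      by (intro exI[of _ n0] allI impI) (smt (verit) c0 mult_left_mono of_nat_mono)
  qed
  then show ?thesis
  proof (rule eventually_mono)
    fix n assume Kn: "K < c * real n"
    show "\<forall>m\<le>n. x m < c * real n"
    proof (intro allI impI)
      fix m assume mn: "m \<le> n"
      show "x m < c * real n"
      proof (cases "m < N")
        case True then show ?thesis using xK Kn by fastforce
      next
        case False
        then have "m \<ge> N0" "m \<ge> 1" by (auto simp: N_def)
        then have "x m < c * real m" using N0[of m] by (simp add: pos_divide_less_eq mult.commute)
        also have "\<dots> \<le> c * real n" using mn c0 by simp
        finally show ?thesis .
      qed
    qed
  qed
qed

lemma ev_sets:
  assumes "walk_law \<omega> x M"
  shows "{X \<in> space M. \<exists>m\<le>n. R (X m)} \<in> sets M"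
proof -
  have "{X \<in> space M. \<exists>m\<le>n. R (X m)} = (\<Union>m\<in>{..n}. {X \<in> space M. R (X m)})" by auto
  moreover have "(\<Union>m\<in>{..n}. {X \<in> space M. R (X m)}) \<in> sets M"
    by (rule sets.finite_UN) (auto intro: law_coord_sets[OF assms])
  ultimately show ?thesis by simp
qed

lemma ex_cong_le:
  assumes "\<And>m. m \<le> n \<Longrightarrow> X m = Y m"
  shows "(\<exists>m\<le>n. R (X m)) \<longleftrightarrow> (\<exists>m\<le>n. R (Y m))"
proof
  assume "\<exists>m\<le>n. R (X m)"
  then obtain m where "m \<le> n" "R (X m)" by blast
  then show "\<exists>m\<le>n. R (Y m)" using assms[of m] by (intro exI[of _ m]) simp
next
  assume "\<exists>m\<le>n. R (Y m)"
  then obtain m where "m \<le> n" "R (Y m)" by blast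
  then show "\<exists>m\<le>n. R (X m)" using assms[of m] by (intro exI[of _ m]) simp
qed

lemma AE_imp:
  assumes "AE X in M. P X" "\<And>X. X \<in> space M \<Longrightarrow> P X \<Longrightarrow> Q X"
  shows "AE X in M. Q X"
  by (rule AE_mp[OF AE_conjI[OF assms(1) AE_space]]) (use assms(2) in auto)

lemma dom_max:
  assumes L1: "walk_law \<omega>1 0 M1" and L2: "walk_law \<omega>2 0 M2"
    and U1: "unit_env \<omega>1" and U2: "unit_env \<omega>2" and le: "\<And>x i. \<omega>1 x i \<le> \<omega>2 x i"
  shows "measure M1 {X \<in> space M1. \<exists>m\<le>n. t \<le> real_of_int (X m)}
       \<le> measure M2 {X \<in> space M2. \<exists>m\<le>n. t \<le> real_of_int (X m)}"
proof -
  define Q where "Q = (\<lambda>X::nat \<Rightarrow> int. \<exists>m\<le>n. t \<le> real_of_int (X m))"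
  have dep: "Q X = Q Y" if h: "\<forall>k\<le>n. X k = Y k" for X Y
  proof -
    have "X m = Y m" if "m \<le> n" for m using h that by blast
    then show ?thesis unfolding Q_def by (rule ex_cong_le)
  qed
  have e1: "measure M1 {X \<in> space M1. Q X} = Eexp \<omega>1 (arrbox 0 n) (\<lambda>\<alpha>. if Q (W \<alpha> 0) then 1 else 0)"
  proof -
    have "{X \<in> space M1. Q X} \<in> sets M1" unfolding Q_def by (rule ev_sets[OF L1])
    from law_event[OF L1 dep this] show ?thesis .
  qed
  have e2: "measure M2 {X \<in> space M2. Q X} = Eexp \<omega>2 (arrbox 0 n) (\<lambda>\<alpha>. if Q (W \<alpha> 0) then 1 else 0)"
  proof -
    have "{X \<in> space M2. Q X} \<in> sets M2" unfolding Q_def by (rule ev_sets[OF L2])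
    from law_event[OF L2 dep this] show ?thesis .
  qed
  have Qc: "Q X \<longleftrightarrow> (\<exists>m\<le>n. \<lceil>t\<rceil> \<le> X m)" for X unfolding Q_def by (simp add: ceiling_le_iff)
  have mono: "mono_arr (\<lambda>\<alpha>. if Q (W \<alpha> 0) then 1 else 0)"
    unfolding mono_arr_def
  proof (intro allI impI)
    fix \<alpha> \<beta> :: "int \<times> nat \<Rightarrow> bool" assume ab: "\<forall>c. \<alpha> c \<longrightarrow> \<beta> c"
    have "Q (W \<alpha> 0) \<Longrightarrow> Q (W \<beta> 0)" unfolding Qc by (rule hit_mono[OF ab])
    then show "(if Q (W \<alpha> 0) then 1 else 0) \<le> (if Q (W \<beta> 0) then 1 else (0::real))" by auto
  qed
  have "Eexp \<omega>1 (arrbox 0 n) (\<lambda>\<alpha>. if Q (W \<alpha> 0) then 1 else 0) \<le> Eexp \<omega>2 (arrbox 0 n) (\<lambda>\<alpha>. if Q (W \<alpha> 0) then 1 else 0)"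
    by (rule Eexp_mono_env[OF U1 U2 le mono])
  then have "measure M1 {X \<in> space M1. Q X} \<le> measure M2 {X \<in> space M2. Q X}" using e1 e2 by linarith
  then show ?thesis by (simp only: Q_def)
qed

lemma dom_min:
  assumes L1: "walk_law \<omega>1 0 M1" and L2: "walk_law \<omega>2 0 M2"
    and U1: "unit_env \<omega>1" and U2: "unit_env \<omega>2" and le: "\<And>x i. \<omega>1 x i \<le> \<omega>2 x i"
  shows "measure M2 {X \<in> space M2. \<exists>m\<le>n. real_of_int (X m) \<le> t}
       \<le> measure M1 {X \<in> space M1. \<exists>m\<le>n. real_of_int (X m) \<le> t}"
proof -
  define Q where "Q = (\<lambda>X::nat \<Rightarrow> int. \<exists>m\<le>n. real_of_int (X m) \<le> t)"
  have dep: "Q X = Q Y" if h: "\<forall>k\<le>n. X k = Y k" for X Y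
  proof -
    have "X m = Y m" if "m \<le> n" for m using h that by blast
    then show ?thesis unfolding Q_def by (rule ex_cong_le)
  qed
  have e1: "measure M1 {X \<in> space M1. Q X} = Eexp \<omega>1 (arrbox 0 n) (\<lambda>\<alpha>. if Q (W \<alpha> 0) then 1 else 0)"
  proof -
    have "{X \<in> space M1. Q X} \<in> sets M1" unfolding Q_def by (rule ev_sets[OF L1])
    from law_event[OF L1 dep this] show ?thesis .
  qed
  have e2: "measure M2 {X \<in> space M2. Q X} = Eexp \<omega>2 (arrbox 0 n) (\<lambda>\<alpha>. if Q (W \<alpha> 0) then 1 else 0)"
  proof -
    have "{X \<in> space M2. Q X} \<in> sets M2" unfolding Q_def by (rule ev_sets[OF L2])
    from law_event[OF L2 dep this] show ?thesis .
  qed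
  have Qc: "Q X \<longleftrightarrow> (\<exists>m\<le>n. X m \<le> \<lfloor>t\<rfloor>)" for X unfolding Q_def by (simp add: le_floor_iff)
  have mono: "mono_arr (\<lambda>\<alpha>. 1 - (if Q (W \<alpha> 0) then 1 else 0))"
    unfolding mono_arr_def
  proof (intro allI impI)
    fix \<alpha> \<beta> :: "int \<times> nat \<Rightarrow> bool" assume ab: "\<forall>c. \<alpha> c \<longrightarrow> \<beta> c"
    have "Q (W \<beta> 0) \<Longrightarrow> Q (W \<alpha> 0)" unfolding Qc by (rule hit_mono_min[OF ab])
    then show "1 - (if Q (W \<alpha> 0) then 1 else 0) \<le> 1 - (if Q (W \<beta> 0) then 1 else (0::real))" by auto
  qed
  have "Eexp \<omega>1 (arrbox 0 n) (\<lambda>\<alpha>. 1 - (if Q (W \<alpha> 0) then 1 else 0)) \<le> Eexp \<omega>2 (arrbox 0 n) (\<lambda>\<alpha>. 1 - (if Q (W \<alpha> 0) then 1 else 0))"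
    by (rule Eexp_mono_env[OF U1 U2 le mono])
  then have "Eexp \<omega>2 (arrbox 0 n) (\<lambda>\<alpha>. if Q (W \<alpha> 0) then 1 else 0) \<le> Eexp \<omega>1 (arrbox 0 n) (\<lambda>\<alpha>. if Q (W \<alpha> 0) then 1 else 0)"
    by (simp only: Eexp_diff Eexp_const)
  then have "measure M2 {X \<in> space M2. Q X} \<le> measure M1 {X \<in> space M1. Q X}" using e1 e2 by linarith
  then show ?thesis by (simp only: Q_def)
qed

lemma speed_mono:
  assumes L1: "walk_law \<omega>1 0 M1" and L2: "walk_law \<omega>2 0 M2"
    and U1: "unit_env \<omega>1" and U2: "unit_env \<omega>2" and le: "\<And>x i. \<omega>1 x i \<le> \<omega>2 x i"
    and c1: "AE X in M1. (\<lambda>n. real_of_int (X n) / real n) \<longlonglongrightarrow> v1"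
    and c2: "AE X in M2. (\<lambda>n. real_of_int (X n) / real n) \<longlonglongrightarrow> v2"
  shows "v1 \<le> v2"
proof (rule ccontr)
  assume "\<not> v1 \<le> v2"
  then have v: "v2 < v1" by simp
  have P1: "prob_space M1" and P2: "prob_space M2" using L1 L2 by (auto simp: walk_law_def)
  show False
  proof (cases "0 < v1")
    case True
    define c where "c = (v1 + max v2 0) / 2"
    have c: "0 < c" "v2 < c" "c < v1" using True v by (auto simp: c_def)
    define G1 where "G1 = (\<lambda>n. {X \<in> space M1. \<exists>m\<le>n. c * real n \<le> real_of_int (X m)})"
    define G2 where "G2 = (\<lambda>n. {X \<in> space M2. \<exists>m\<le>n. c * real n \<le> real_of_int (X m)})"
    show False
    proof (rule contra[OF P1 P2])
      show "G1 n \<in> sets M1" for n unfolding G1_def by (rule ev_sets[OF L1])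
      show "G2 n \<in> sets M2" for n unfolding G2_def by (rule ev_sets[OF L2])
      show "measure M1 (G1 n) \<le> measure M2 (G2 n)" for n
        unfolding G1_def G2_def by (rule dom_max[OF L1 L2 U1 U2 le])
      show "AE X in M1. eventually (\<lambda>n. X \<in> G1 n) sequentially"
      proof (rule AE_imp[OF c1])
        fix X assume X: "X \<in> space M1" "(\<lambda>n. real_of_int (X n) / real n) \<longlonglongrightarrow> v1"
        from F1[OF X(2) c(3)] show "eventually (\<lambda>n. X \<in> G1 n) sequentially"
          by (rule eventually_mono) (use X(1) in \<open>auto simp: G1_def\<close>)
      qed
      show "AE X in M2. eventually (\<lambda>n. X \<notin> G2 n) sequentially"
      proof (rule AE_imp[OF c2])
        fix X assume X: "(\<lambda>n. real_of_int (X n) / real n) \<longlonglongrightarrow> v2"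
        from F2[OF X c(2) c(1)] show "eventually (\<lambda>n. X \<notin> G2 n) sequentially"
          by (rule eventually_mono) (auto simp: G2_def not_le)
      qed
    qed
  next
    case False
    define c where "c = (v1 + v2) / 2"
    have c: "c < 0" "v2 < c" "c < v1" using False v by (auto simp: c_def)
    define G1 where "G1 = (\<lambda>n. {X \<in> space M2. \<exists>m\<le>n. real_of_int (X m) \<le> c * real n})"
    define G2 where "G2 = (\<lambda>n. {X \<in> space M1. \<exists>m\<le>n. real_of_int (X m) \<le> c * real n})"
    have neg: "(\<lambda>n. real_of_int (- X n) / real n) \<longlonglongrightarrow> - v"
      if "(\<lambda>n. real_of_int (X n) / real n) \<longlonglongrightarrow> v" for X :: "nat \<Rightarrow> int" and v
      using tendsto_minus[OF that] by simp
    show False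
    proof (rule contra[OF P2 P1])
      show "G1 n \<in> sets M2" for n unfolding G1_def by (rule ev_sets[OF L2])
      show "G2 n \<in> sets M1" for n unfolding G2_def by (rule ev_sets[OF L1])
      show "measure M2 (G1 n) \<le> measure M1 (G2 n)" for n
        unfolding G1_def G2_def by (rule dom_min[OF L1 L2 U1 U2 le])
      show "AE X in M2. eventually (\<lambda>n. X \<in> G1 n) sequentially"
      proof (rule AE_imp[OF c2])
        fix X assume X: "X \<in> space M2" "(\<lambda>n. real_of_int (X n) / real n) \<longlonglongrightarrow> v2"
        have "- c < - v2" using c by simp
        from F1[OF neg[OF X(2)] this] show "eventually (\<lambda>n. X \<in> G1 n) sequentially"
          by (rule eventually_mono) (use X(1) in \<open>auto simp: G1_def\<close>)
      qed
      show "AE X in M1. eventually (\<lambda>n. X \<notin> G2 n) sequentially"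
      proof (rule AE_imp[OF c1])
        fix X assume X: "(\<lambda>n. real_of_int (X n) / real n) \<longlonglongrightarrow> v1"
        have "- v1 < - c" "0 < - c" using c by auto
        from F2[OF neg[OF X] this] show "eventually (\<lambda>n. X \<notin> G2 n) sequentially"
          by (rule eventually_mono) (auto simp: G2_def not_le)
      qed
    qed
  qed
qed

theorem mainTheorem17:
  fixes Pbar :: "(env \<times> env) measure"
    and P :: "env \<Rightarrow> (nat \<Rightarrow> int) measure"
    and v1 v2 :: real
  assumes "prob_space Pbar"
    and "sets Pbar = sets (env_M \<Otimes>\<^sub>M env_M)"
    and "AE w in Pbar. fst w \<in> Omega_plus \<and> snd w \<in> Omega_plus"
    and "AE w in Pbar. env_le (fst w) (snd w)"
    and "stationary_ergodic Pbar (\<lambda>w. nonneg_part (fst w))"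
    and "stationary_ergodic Pbar (\<lambda>w. nonneg_part (snd w))"
    and "\<forall>\<omega> \<in> Omega_plus. walk_law \<omega> 0 (P \<omega>)"
    and "AE w in Pbar. AE X in P (fst w).
           (\<lambda>n. real_of_int (X n) / real n) \<longlonglongrightarrow> v1"
    and "AE w in Pbar. AE X in P (snd w).
           (\<lambda>n. real_of_int (X n) / real n) \<longlonglongrightarrow> v2"
  shows "v1 \<le> v2"
proof -
  let ?Q = "\<lambda>w. (fst w \<in> Omega_plus \<and> snd w \<in> Omega_plus) \<and> env_le (fst w) (snd w) \<and>
     (AE X in P (fst w). (\<lambda>n. real_of_int (X n) / real n) \<longlonglongrightarrow> v1) \<and>
     (AE X in P (snd w). (\<lambda>n. real_of_int (X n) / real n) \<longlonglongrightarrow> v2)"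
  have ae: "AE w in Pbar. ?Q w"
    using AE_conjI[OF assms(3) AE_conjI[OF assms(4) AE_conjI[OF assms(8) assms(9)]]] .
  have "\<exists>w. ?Q w"
  proof (rule ccontr)
    assume nq: "\<not> (\<exists>w. ?Q w)"
    have "AE w in Pbar. ?Q w \<longrightarrow> False" by (intro AE_I2) (use nq in blast)
    with ae have "AE w in Pbar. False" by (rule AE_mp)
    then show False using prob_space.AE_False[OF assms(1)] by simp
  qed
  then obtain w where w: "?Q w" by blast
  have om: "fst w \<in> Omega_plus" "snd w \<in> Omega_plus" using w by auto
  have U: "unit_env \<omega>" if "\<omega> \<in> Omega_plus" for \<omega>
    unfolding unit_env_def
  proof (intro allI)
    fix x i
    have "1/2 \<le> \<omega> x i \<and> \<omega> x i \<le> 1" using that unfolding Omega_plus_def by blast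
    then show "0 \<le> \<omega> x i \<and> \<omega> x i \<le> 1" by linarith
  qed
  show ?thesis
  proof (rule speed_mono)
    show "walk_law (fst w) 0 (P (fst w))" using assms(7) om by simp
    show "walk_law (snd w) 0 (P (snd w))" using assms(7) om by simp
    show "unit_env (fst w)" "unit_env (snd w)" using U om by auto
    show "fst w x i \<le> snd w x i" for x i using w by (simp add: env_le_def)
    show "AE X in P (fst w). (\<lambda>n. real_of_int (X n) / real n) \<longlonglongrightarrow> v1" using w by simp
    show "AE X in P (snd w). (\<lambda>n. real_of_int (X n) / real n) \<longlonglongrightarrow> v2" using w by simp
  qed
qed

end
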